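(* Let $\mathcal{G}$ be a (possibly weighted) undirected graph on $n$ vertices $v_1,\dots,v_n$ in which every vertex has positive degree, and let $\mathbf{P}$, $\mathbf{D}$ be as in the context. Let $0 < t_1 < t_2 < \cdots < t_J$ be integers ($J \ge 1$), and define the filter bank $\mathcal{W}_J' = \{\boldsymbol{\Psi}_j', \boldsymbol{\Phi}_J'\}_{j=0}^{J-1}$ by $$\boldsymbol{\Psi}_0' = \mathbf{I}_n - \mathbf{P}^{t_1},\qquad \boldsymbol{\Psi}_j' = \mathbf{P}^{t_j} - \mathbf{P}^{t_{j+1}}\ (1 \le j \le J-1),\qquad \boldsymbol{\Phi}_J' = \mathbf{P}^{t_J}.$$ Then there exists a constant $C > 0$ depending only on $t_1$ and $t_J$ such that for all $\mathbf{x} \in \mathbb{R}^n$, $$C\,\|\mathbf{x}\|_{\mathbf{D}^{-1/2}}^2 \;\le\; \|\boldsymbol{\Phi}_J'\mathbf{x}\|_{\mathbf{D}^{-1/2}}^2 + \sum_{j=0}^{J-1} \|\boldsymbol{\Psi}_j'\mathbf{x}\|_{\mathbf{D}^{-1/2}}^2 \;\le\; \|\mathbf{x}\|_{\mathbf{D}^{-1/2}}^2 .$$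
   Context: $\mathbf{A}$ denotes the (symmetric, nonnegative) weighted adjacency matrix of $\mathcal{G}$, $d_i = \sum_k \mathbf{A}[i,k] > 0$ the degree of $v_i$, and $\mathbf{D} = \mathrm{diag}(d_1,\dots,d_n)$. $\mathbf{P} = \tfrac12(\mathbf{I}_n + \mathbf{A}\mathbf{D}^{-1})$ is the lazy random walk matrix; $\mathbf{P}^t$ denotes its $t$-th matrix power. Graph signals $\mathbf{x}\in\mathbb{R}^n$ are equipped with the weighted inner product $\langle \mathbf{x},\mathbf{y}\rangle_{\mathbf{D}^{-1/2}} = \langle \mathbf{D}^{-1/2}\mathbf{x}, \mathbf{D}^{-1/2}\mathbf{y}\rangle$ (standard Euclidean inner product on the right) and induced norm $\|\mathbf{x}\|_{\mathbf{D}^{-1/2}}^2 = \|\mathbf{D}^{-1/2}\mathbf{x}\|_2^2 = \sum_{i=1}^n \mathbf{x}[i]^2/d_i$; this space is denoted $L^2(\mathcal{G},\mathbf{D}^{-1/2})$. *)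

theory Defs
  imports Main Complex_Main
begin

text \<open>Vertices are 0..n-1; matrices are functions nat => nat => real, only
entries with indices < n matter; vectors are functions nat => real.\<close>

definition deg :: "nat \<Rightarrow> (nat \<Rightarrow> nat \<Rightarrow> real) \<Rightarrow> nat \<Rightarrow> real" where
  "deg n A i = (\<Sum>k<n. A i k)"

definition idm :: "nat \<Rightarrow> nat \<Rightarrow> real" where
  "idm i j = (if i = j then 1 else 0)"

definition mat_mult :: "nat \<Rightarrow> (nat \<Rightarrow> nat \<Rightarrow> real) \<Rightarrow> (nat \<Rightarrow> nat \<Rightarrow> real) \<Rightarrow> nat \<Rightarrow> nat \<Rightarrow> real" where
  "mat_mult n M N = (\<lambda>i j. \<Sum>k<n. M i k * N k j)"

fun mat_pow :: "nat \<Rightarrow> (nat \<Rightarrow> nat \<Rightarrow> real) \<Rightarrow> nat \<Rightarrow> nat \<Rightarrow> nat \<Rightarrow> real" where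
  "mat_pow n M 0 = idm"
| "mat_pow n M (Suc t) = mat_mult n M (mat_pow n M t)"

definition mat_vec :: "nat \<Rightarrow> (nat \<Rightarrow> nat \<Rightarrow> real) \<Rightarrow> (nat \<Rightarrow> real) \<Rightarrow> nat \<Rightarrow> real" where
  "mat_vec n M x = (\<lambda>i. \<Sum>k<n. M i k * x k)"

definition lazy_walk :: "nat \<Rightarrow> (nat \<Rightarrow> nat \<Rightarrow> real) \<Rightarrow> nat \<Rightarrow> nat \<Rightarrow> real" where
  "lazy_walk n A = (\<lambda>i j. (idm i j + A i j / deg n A j) / 2)"

definition wnorm2 :: "nat \<Rightarrow> (nat \<Rightarrow> nat \<Rightarrow> real) \<Rightarrow> (nat \<Rightarrow> real) \<Rightarrow> real" where
  "wnorm2 n A x = (\<Sum>i<n. (x i)\<^sup>2 / deg n A i)"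

definition is_graph :: "nat \<Rightarrow> (nat \<Rightarrow> nat \<Rightarrow> real) \<Rightarrow> bool" where
  "is_graph n A \<longleftrightarrow> (\<forall>i<n. \<forall>j<n. A i j = A j i \<and> 0 \<le> A i j) \<and> (\<forall>i<n. 0 < deg n A i)"

end

theory Submission
  imports Defs "HOL-Analysis.Convex"
begin

locale gr = fixes n :: nat and A :: "nat \<Rightarrow> nat \<Rightarrow> real"
  assumes g: "is_graph n A"
begin

abbreviation "d i \<equiv> deg n A i"

lemma dpos: "i < n \<Longrightarrow> 0 < d i" using g unfolding is_graph_def by auto
lemma Asym: "i < n \<Longrightarrow> j < n \<Longrightarrow> A i j = A j i" using g unfolding is_graph_def by auto
lemma Anonneg: "i < n \<Longrightarrow> j < n \<Longrightarrow> 0 \<le> A i j" using g unfolding is_graph_def by auto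

definition ip :: "(nat \<Rightarrow> real) \<Rightarrow> (nat \<Rightarrow> real) \<Rightarrow> real" where
  "ip x y = (\<Sum>i<n. x i * y i / d i)"

lemma nrm_ip: "wnorm2 n A x = ip x x"
  unfolding wnorm2_def ip_def by (simp add: power2_eq_square)

lemma ip_comm: "ip x y = ip y x" unfolding ip_def by (simp add: mult.commute)

lemma nrm_nonneg: "0 \<le> wnorm2 n A x"
  unfolding wnorm2_def by (intro sum_nonneg) (auto intro: divide_nonneg_pos dpos)

lemma wnorm_cong: "(\<And>i. i < n \<Longrightarrow> u i = v i) \<Longrightarrow> wnorm2 n A u = wnorm2 n A v"
  unfolding wnorm2_def by simp

lemma ip_cong: "(\<And>i. i < n \<Longrightarrow> u i = u' i) \<Longrightarrow> (\<And>i. i < n \<Longrightarrow> v i = v' i) \<Longrightarrow> ip u v = ip u' v'"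
  unfolding ip_def by simp

lemma nrm_diff: "wnorm2 n A (\<lambda>i. x i - y i) = wnorm2 n A x - 2 * ip x y + wnorm2 n A y"
proof -
  have "wnorm2 n A (\<lambda>i. x i - y i) = (\<Sum>i<n. x i * x i / d i - 2 * (x i * y i / d i) + y i * y i / d i)"
    unfolding wnorm2_def by (intro sum.cong refl) (simp add: power2_eq_square divide_inverse algebra_simps)
  thus ?thesis unfolding nrm_ip ip_def by (simp add: sum.distrib sum_subtractf sum_distrib_left)
qed

lemma nrm_sum: "wnorm2 n A (\<lambda>i. x i + y i) = wnorm2 n A x + 2 * ip x y + wnorm2 n A y"
proof -
  have "wnorm2 n A (\<lambda>i. x i + y i) = (\<Sum>i<n. x i * x i / d i + 2 * (x i * y i / d i) + y i * y i / d i)"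
    unfolding wnorm2_def by (intro sum.cong refl) (simp add: power2_eq_square divide_inverse algebra_simps)
  thus ?thesis unfolding nrm_ip ip_def by (simp add: sum.distrib sum_distrib_left)
qed

lemma ip_CS: "ip x y \<le> sqrt (wnorm2 n A x) * sqrt (wnorm2 n A y)"
proof -
  have "(ip x y)^2 \<le> wnorm2 n A x * wnorm2 n A y"
  proof -
    have e: "ip x y = (\<Sum>i<n. (x i / sqrt (d i)) * (y i / sqrt (d i)))"
      unfolding ip_def
    proof (intro sum.cong refl)
      fix i assume "i \<in> {..<n}"
      hence "0 < d i" using dpos by auto
      hence "sqrt (d i) * sqrt (d i) = d i" by simp
      thus "x i * y i / d i = (x i / sqrt (d i)) * (y i / sqrt (d i))" by (simp add: field_simps)
    qed
    have ex: "wnorm2 n A x = (\<Sum>i<n. (x i / sqrt (d i))^2)"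
      unfolding wnorm2_def
    proof (intro sum.cong refl)
      fix i assume "i \<in> {..<n}"
      hence "0 < d i" using dpos by auto
      thus "(x i)^2 / d i = (x i / sqrt (d i))^2" by (simp add: power_divide)
    qed
    have ey: "wnorm2 n A y = (\<Sum>i<n. (y i / sqrt (d i))^2)"
      unfolding wnorm2_def
    proof (intro sum.cong refl)
      fix i assume "i \<in> {..<n}"
      hence "0 < d i" using dpos by auto
      thus "(y i)^2 / d i = (y i / sqrt (d i))^2" by (simp add: power_divide)
    qed
    show ?thesis unfolding e ex ey by (rule Cauchy_Schwarz_ineq_sum)
  qed
  from this have "\<bar>ip x y\<bar> \<le> sqrt (wnorm2 n A x * wnorm2 n A y)"
    using real_sqrt_le_mono by fastforce
  thus ?thesis by (simp add: real_sqrt_mult)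
qed

lemma tri: "sqrt (wnorm2 n A (\<lambda>i. x i + y i)) \<le> sqrt (wnorm2 n A x) + sqrt (wnorm2 n A y)"
proof -
  have "wnorm2 n A (\<lambda>i. x i + y i) \<le> (sqrt (wnorm2 n A x) + sqrt (wnorm2 n A y))^2"
    unfolding nrm_sum power2_sum using ip_CS[of x y] nrm_nonneg[of x] nrm_nonneg[of y] by simp
  thus ?thesis by (simp add: real_le_lsqrt nrm_nonneg)
qed

definition Mv :: "(nat \<Rightarrow> real) \<Rightarrow> nat \<Rightarrow> real" where
  "Mv x = (\<lambda>i. \<Sum>j<n. A i j * x j / d j)"

definition Pv :: "(nat \<Rightarrow> real) \<Rightarrow> nat \<Rightarrow> real" where
  "Pv x = mat_vec n (lazy_walk n A) x"

lemma idm_sum: "i < n \<Longrightarrow> (\<Sum>k<n. idm i k * x k) = x i"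
proof -
  assume i: "i < n"
  have h: "(\<lambda>k. idm i k * x k) = (\<lambda>k. if i = k then x i else 0)" by (auto simp: idm_def)
  show ?thesis unfolding h using i by simp
qed

lemma Pv_eq: "i < n \<Longrightarrow> Pv x i = (x i + Mv x i) / 2"
proof -
  assume i: "i < n"
  have "Pv x i = (\<Sum>k<n. idm i k * x k / 2 + A i k * x k / d k / 2)"
    unfolding Pv_def mat_vec_def lazy_walk_def by (intro sum.cong refl) (simp add: field_simps)
  also have "\<dots> = (\<Sum>k<n. idm i k * x k) / 2 + (\<Sum>k<n. A i k * x k / d k) / 2"
    by (simp only: sum.distrib sum_divide_distrib)
  also have "\<dots> = ((\<Sum>k<n. idm i k * x k) + Mv x i) / 2"
    unfolding Mv_def by simp
  finally show ?thesis using idm_sum[OF i] by simp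
qed

lemma Pv_diff: "Pv (\<lambda>i. u i - v i) = (\<lambda>i. Pv u i - Pv v i)"
  unfolding Pv_def mat_vec_def by (simp add: right_diff_distrib sum_subtractf)

lemma ip_M_sym: "ip (Mv x) y = ip x (Mv y)"
proof -
  have "ip (Mv x) y = (\<Sum>i<n. \<Sum>j<n. A i j * x j * y i / (d j * d i))"
    unfolding ip_def Mv_def by (simp add: sum_distrib_right sum_divide_distrib)
  also have "\<dots> = (\<Sum>j<n. \<Sum>i<n. A i j * x j * y i / (d j * d i))"
    by (rule sum.swap)
  also have "\<dots> = (\<Sum>j<n. \<Sum>i<n. A j i * x j * y i / (d j * d i))"
    by (intro sum.cong refl) (simp add: Asym)
  also have "\<dots> = ip x (Mv y)"
    unfolding ip_def Mv_def by (simp add: sum_distrib_left sum_divide_distrib mult.commute mult.left_commute)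
  finally show ?thesis .
qed

lemma M_row: "i < n \<Longrightarrow> (Mv x i)^2 / d i \<le> (\<Sum>j<n. A i j * (x j / d j)^2)"
proof -
  assume i: "i < n"
  have "(Mv x i)^2 = (\<Sum>j<n. sqrt (A i j) * (sqrt (A i j) * (x j / d j)))^2"
    unfolding Mv_def using Anonneg[OF i]
    by (intro arg_cong[where f="\<lambda>z. z^2"] sum.cong refl) (simp add: mult.assoc[symmetric])
  also have "\<dots> \<le> (\<Sum>j<n. (sqrt (A i j))^2) * (\<Sum>j<n. (sqrt (A i j) * (x j / d j))^2)"
    by (rule Cauchy_Schwarz_ineq_sum)
  also have "(\<Sum>j<n. (sqrt (A i j))^2) = d i"
    unfolding deg_def using Anonneg[OF i] by (intro sum.cong refl) simp
  also have "(\<Sum>j<n. (sqrt (A i j) * (x j / d j))^2) = (\<Sum>j<n. A i j * (x j / d j)^2)"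
    using Anonneg[OF i] by (intro sum.cong refl) (simp add: power_mult_distrib power_divide)
  finally show ?thesis using dpos[OF i] by (simp add: divide_le_eq mult.commute)
qed

lemma nrm_M: "wnorm2 n A (Mv x) \<le> wnorm2 n A x"
proof -
  have "wnorm2 n A (Mv x) \<le> (\<Sum>i<n. \<Sum>j<n. A i j * (x j / d j)^2)"
    unfolding wnorm2_def by (intro sum_mono M_row) auto
  also have "\<dots> = (\<Sum>j<n. \<Sum>i<n. A i j * (x j / d j)^2)" by (rule sum.swap)
  also have "\<dots> = (\<Sum>j<n. d j * (x j / d j)^2)"
    unfolding deg_def by (intro sum.cong refl) (simp add: sum_distrib_right Asym)
  also have "\<dots> = wnorm2 n A x"
    unfolding wnorm2_def using dpos by (intro sum.cong refl) (simp add: power2_eq_square)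
  finally show ?thesis .
qed

lemma ip_M_le: "ip (Mv x) x \<le> wnorm2 n A x"
  using nrm_diff[of x "Mv x"] nrm_nonneg[of "\<lambda>i. x i - Mv x i"] nrm_M[of x] ip_comm[of x "Mv x"]
  by linarith

lemma ip_half: "ip (\<lambda>i. (u i + v i) / 2) y = (ip u y + ip v y) / 2"
  unfolding ip_def by (simp add: sum.distrib[symmetric] sum_divide_distrib add_divide_distrib algebra_simps)

lemma ip_half2: "ip y (\<lambda>i. (u i + v i) / 2) = (ip y u + ip y v) / 2"
  using ip_half ip_comm by metis

lemma ip_P: "ip (Pv x) y = (ip x y + ip (Mv x) y) / 2"
proof -
  have "ip (Pv x) y = ip (\<lambda>i. (x i + Mv x i) / 2) y" by (rule ip_cong) (auto simp: Pv_eq)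
  thus ?thesis by (simp add: ip_half)
qed

lemma ip_P_sym: "ip (Pv x) y = ip x (Pv y)"
proof -
  have "ip x (Pv y) = ip x (\<lambda>i. (y i + Mv y i) / 2)" by (rule ip_cong) (auto simp: Pv_eq)
  hence "ip x (Pv y) = (ip x y + ip x (Mv y)) / 2" by (simp add: ip_half2)
  thus ?thesis using ip_P[of x y] ip_M_sym[of x y] by simp
qed

lemma nrm_P: "wnorm2 n A (Pv x) = (wnorm2 n A x + 2 * ip (Mv x) x + wnorm2 n A (Mv x)) / 4"
proof -
  have "wnorm2 n A (Pv x) = ip (\<lambda>i. (x i + Mv x i) / 2) (\<lambda>i. (x i + Mv x i) / 2)"
    unfolding nrm_ip by (rule ip_cong) (auto simp: Pv_eq)
  also have "\<dots> = ((ip x x + ip x (Mv x)) / 2 + (ip (Mv x) x + ip (Mv x) (Mv x)) / 2) / 2"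
    by (simp add: ip_half ip_half2)
  finally show ?thesis using ip_comm[of x "Mv x"] unfolding nrm_ip by (simp add: field_simps)
qed

lemma P_le1: "wnorm2 n A (Pv x) \<le> ip (Pv x) x"
  using nrm_P[of x] ip_P[of x x] nrm_M[of x] by (simp add: nrm_ip)

lemma P_le2: "ip (Pv x) x \<le> wnorm2 n A x"
  using ip_P[of x x] ip_M_le[of x] by (simp add: nrm_ip)


definition pw :: "nat \<Rightarrow> (nat \<Rightarrow> real) \<Rightarrow> nat \<Rightarrow> real" where
  "pw k x = (Pv ^^ k) x"

lemma pw_0[simp]: "pw 0 x = x" unfolding pw_def by simp
lemma pw_Suc: "pw (Suc k) x = Pv (pw k x)" unfolding pw_def by simp
lemma pw_Suc': "pw (Suc k) x = pw k (Pv x)" unfolding pw_def by (simp add: funpow_swap1)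
lemma pw_add: "pw (a + b) x = pw a (pw b x)" unfolding pw_def by (simp add: funpow_add)

lemma pw_sym: "ip (pw k x) y = ip x (pw k y)"
proof (induction k arbitrary: y)
  case 0 then show ?case by simp
next
  case (Suc k)
  have "ip (pw (Suc k) x) y = ip (pw k x) (Pv y)" by (simp add: pw_Suc ip_P_sym)
  also have "\<dots> = ip x (pw (Suc k) y)" by (simp add: Suc pw_Suc')
  finally show ?case .
qed

lemma pw_diff: "pw k (\<lambda>i. u i - v i) = (\<lambda>i. pw k u i - pw k v i)"
  by (induction k) (simp_all add: pw_Suc Pv_diff)

lemma pw_contr: "wnorm2 n A (pw k x) \<le> wnorm2 n A x"
proof (induction k)
  case 0 then show ?case by simp
next
  case (Suc k)
  then show ?case using P_le1[of "pw k x"] P_le2[of "pw k x"] by (simp add: pw_Suc)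
qed

lemma ip_pw_add: "ip (pw (a + b) z) z = ip (pw a z) (pw b z)"
  by (simp add: pw_add pw_sym ip_comm)

lemma g_step: "ip (pw (Suc e) z) z \<le> ip (pw e z) z"
proof (cases "even e")
  case True
  then obtain k where e: "e = k + k" by (metis evenE mult_2)
  have "ip (pw (Suc e) z) z = ip (Pv (pw k z)) (pw k z)"
    using ip_pw_add[of "Suc k" k z] by (simp add: e pw_Suc)
  also have "\<dots> \<le> wnorm2 n A (pw k z)" by (rule P_le2)
  also have "\<dots> = ip (pw e z) z" using ip_pw_add[of k k z] by (simp add: e nrm_ip)
  finally show ?thesis .
next
  case False
  then obtain k where e: "e = Suc (k + k)" by (metis oddE mult_2 Suc_eq_plus1)
  have "ip (pw (Suc e) z) z = wnorm2 n A (Pv (pw k z))"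
    using ip_pw_add[of "Suc k" "Suc k" z] by (simp add: e pw_Suc nrm_ip)
  also have "\<dots> \<le> ip (Pv (pw k z)) (pw k z)" by (rule P_le1)
  also have "\<dots> = ip (pw e z) z" using ip_pw_add[of "Suc k" k z] by (simp add: e pw_Suc)
  finally show ?thesis .
qed

lemma g_mono: "a \<le> b \<Longrightarrow> ip (pw b z) z \<le> ip (pw a z) z"
proof (induction b rule: dec_induct)
  case base then show ?case by simp
next
  case (step m) then show ?case using g_step[of m z] by linarith
qed

lemma claim: "a \<le> b \<Longrightarrow> wnorm2 n A (\<lambda>i. pw a x i - pw b x i) \<le> wnorm2 n A (pw a x) - wnorm2 n A (pw b x)"
proof -
  assume ab: "a \<le> b"
  define c where "c = b - a"
  define z where "z = pw a x"
  have b: "pw b x = pw c z" unfolding c_def z_def using ab pw_add[of "b - a" a x] by simp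
  have "wnorm2 n A (pw c z) = ip (pw (c + c) z) z" by (simp add: ip_pw_add nrm_ip)
  also have "\<dots> \<le> ip (pw c z) z" by (rule g_mono) simp
  finally have "wnorm2 n A (pw c z) \<le> ip z (pw c z)" by (simp add: ip_comm)
  thus ?thesis using nrm_diff[of z "pw c z"] unfolding b z_def[symmetric] by linarith
qed


lemma sq_mono: "wnorm2 n A u \<le> wnorm2 n A v \<Longrightarrow> sqrt (wnorm2 n A u) \<le> sqrt (wnorm2 n A v)"
  by simp

lemma chain: "sqrt (wnorm2 n A x) \<le> real m * sqrt (wnorm2 n A (\<lambda>i. x i - pw s x i)) + sqrt (wnorm2 n A (pw (m * s) x))"
proof (induction m)
  case 0 then show ?case by simp
next
  case (Suc m)
  let ?a = "sqrt (wnorm2 n A (\<lambda>i. x i - pw s x i))"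
  let ?u = "\<lambda>i. pw (m * s) x i - pw (Suc m * s) x i"
  let ?v = "pw (Suc m * s) x"
  have "sqrt (wnorm2 n A (pw (m * s) x)) = sqrt (wnorm2 n A (\<lambda>i. ?u i + ?v i))" by simp
  also have "\<dots> \<le> sqrt (wnorm2 n A ?u) + sqrt (wnorm2 n A ?v)" by (rule tri)
  also have "?u = pw (m * s) (\<lambda>i. x i - pw s x i)"
    using pw_add[of "m * s" s x] by (simp add: pw_diff add.commute)
  also have "sqrt (wnorm2 n A (pw (m * s) (\<lambda>i. x i - pw s x i))) \<le> ?a"
    by (rule sq_mono) (rule pw_contr)
  finally show ?case using Suc by (simp add: algebra_simps)
qed

lemma mat_vec_mult: "mat_vec n (mat_mult n M N) x = mat_vec n M (mat_vec n N x)"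
proof (rule ext)
  fix i
  have "mat_vec n (mat_mult n M N) x i = (\<Sum>k<n. \<Sum>l<n. M i l * N l k * x k)"
    unfolding mat_vec_def mat_mult_def by (simp add: sum_distrib_right)
  also have "\<dots> = (\<Sum>l<n. \<Sum>k<n. M i l * N l k * x k)" by (rule sum.swap)
  also have "\<dots> = mat_vec n M (mat_vec n N x) i"
    unfolding mat_vec_def by (simp add: sum_distrib_left mult.assoc)
  finally show "mat_vec n (mat_mult n M N) x i = mat_vec n M (mat_vec n N x) i" .
qed

lemma mat_vec_cong: "(\<And>k. k < n \<Longrightarrow> u k = v k) \<Longrightarrow> mat_vec n M u = mat_vec n M v"
  unfolding mat_vec_def by simp

lemma mat_vec_diff: "mat_vec n (\<lambda>a b. M a b - N a b) x = (\<lambda>i. mat_vec n M x i - mat_vec n N x i)"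
  unfolding mat_vec_def by (simp add: left_diff_distrib sum_subtractf)

lemma mv_pow: "i < n \<Longrightarrow> mat_vec n (mat_pow n (lazy_walk n A) k) x i = pw k x i"
proof (induction k arbitrary: i)
  case 0 then show ?case by (simp add: mat_vec_def idm_sum)
next
  case (Suc k)
  have "mat_vec n (mat_pow n (lazy_walk n A) (Suc k)) x
      = mat_vec n (lazy_walk n A) (mat_vec n (mat_pow n (lazy_walk n A) k) x)"
    by (simp add: mat_vec_mult)
  also have "\<dots> = mat_vec n (lazy_walk n A) (pw k x)" by (rule mat_vec_cong) (rule Suc.IH)
  finally show ?case by (simp add: pw_Suc Pv_def)
qed


lemma mv_idm: "i < n \<Longrightarrow> mat_vec n idm x i = x i"
  unfolding mat_vec_def by (rule idm_sum)

lemma main: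
  fixes J :: nat and t :: "nat \<Rightarrow> nat" and x :: "nat \<Rightarrow> real"
  assumes J: "1 \<le> J" and mono: "\<forall>j. 1 \<le> j \<and> j < J \<longrightarrow> t j < t (j + 1)" and t1: "0 < t 1"
  shows "let P = lazy_walk n A;
          Phi = mat_pow n P (t J);
          Psi = (\<lambda>j. if j = 0 then (\<lambda>a b. idm a b - mat_pow n P (t 1) a b)
                     else (\<lambda>a b. mat_pow n P (t j) a b - mat_pow n P (t (j + 1)) a b));
          S = wnorm2 n A (mat_vec n Phi x) + (\<Sum>j<J. wnorm2 n A (mat_vec n (Psi j) x))
      in 1 / (real (t J)^2 + 1) * wnorm2 n A x \<le> S \<and> S \<le> wnorm2 n A x"
proof -
  let ?P = "lazy_walk n A"
  define Psi where "Psi = (\<lambda>j. if j = 0 then (\<lambda>a b. idm a b - mat_pow n ?P (t 1) a b)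
                     else (\<lambda>a b. mat_pow n ?P (t j) a b - mat_pow n ?P (t (j + 1)) a b))"
  define s where "s j = (if j = 0 then 0 else t j)" for j :: nat
  define f where "f j = wnorm2 n A (pw (s j) x)" for j :: nat
  have hterm: "wnorm2 n A (mat_vec n (Psi j) x) = wnorm2 n A (\<lambda>i. pw (s j) x i - pw (s (Suc j)) x i)" for j :: nat
  proof (cases "j = 0")
    case True
    show ?thesis unfolding Psi_def using True
      by (intro wnorm_cong) (simp add: mat_vec_diff mv_pow s_def mv_idm)
  next
    case False
    show ?thesis unfolding Psi_def using False
      by (intro wnorm_cong) (simp add: mat_vec_diff mv_pow s_def)
  qed
  have phi: "wnorm2 n A (mat_vec n (mat_pow n ?P (t J)) x) = wnorm2 n A (pw (t J) x)"
    by (intro wnorm_cong) (simp add: mv_pow)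
  define S where "S = wnorm2 n A (pw (t J) x) + (\<Sum>j<J. wnorm2 n A (mat_vec n (Psi j) x))"
  have smono: "j < J \<Longrightarrow> s j \<le> s (Suc j)" for j
    using mono by (cases "j = 0") (auto simp: s_def less_imp_le)
  have "(\<Sum>j<J. wnorm2 n A (mat_vec n (Psi j) x)) \<le> (\<Sum>j<J. f j - f (Suc j))"
    unfolding hterm f_def by (intro sum_mono claim smono) simp
  also have "\<dots> = f 0 - f J" by (rule sum_lessThan_telescope')
  also have "f 0 = wnorm2 n A x" by (simp add: f_def s_def)
  also have "f J = wnorm2 n A (pw (t J) x)" using J by (simp add: f_def s_def)
  finally have up: "S \<le> wnorm2 n A x" unfolding S_def by simp
  define a2 where "a2 = wnorm2 n A (\<lambda>i. x i - pw (t 1) x i)"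
  define b2 where "b2 = wnorm2 n A (pw (t J) x)"
  have "wnorm2 n A (mat_vec n (Psi 0) x) \<le> (\<Sum>j<J. wnorm2 n A (mat_vec n (Psi j) x))"
    using J by (intro member_le_sum) (auto simp: nrm_nonneg)
  hence lo1: "a2 + b2 \<le> S" unfolding S_def a2_def b2_def hterm by (simp add: s_def)
  have "sqrt (wnorm2 n A x) \<le> real (t J) * sqrt a2 + sqrt (wnorm2 n A (pw (t J * t 1) x))"
    unfolding a2_def by (rule chain)
  also have "pw (t J * t 1) x = pw ((t 1 - 1) * t J) (pw (t J) x)"
  proof -
    have "t J * t 1 = (t 1 - 1) * t J + t J" using t1 by (cases "t 1") auto
    thus ?thesis by (simp add: pw_add)
  qed
  also have "sqrt (wnorm2 n A (pw ((t 1 - 1) * t J) (pw (t J) x))) \<le> sqrt b2"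
    unfolding b2_def by (rule sq_mono) (rule pw_contr)
  finally have hs: "sqrt (wnorm2 n A x) \<le> real (t J) * sqrt a2 + sqrt b2" by simp
  have a0: "0 \<le> a2" "0 \<le> b2" unfolding a2_def b2_def by (auto simp: nrm_nonneg)
  have "wnorm2 n A x = (sqrt (wnorm2 n A x))^2" using nrm_nonneg[of x] by simp
  also have "\<dots> \<le> (real (t J) * sqrt a2 + sqrt b2)^2"
    by (rule power_mono[OF hs]) (simp add: nrm_nonneg)
  also have "\<dots> \<le> (real (t J)^2 + 1) * (a2 + b2)"
  proof -
    have "0 \<le> (sqrt a2 - real (t J) * sqrt b2)^2" by simp
    moreover have "(m^2 + 1) * (p^2 + q^2) - (m * p + q)^2 = (p - m * q)^2" for m p q :: real
      by (simp add: power2_eq_square algebra_simps)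
    moreover have "(sqrt a2)^2 = a2" "(sqrt b2)^2 = b2" using a0 by simp_all
    ultimately show ?thesis by (metis diff_ge_0_iff_ge)
  qed
  finally have "1 / (real (t J)^2 + 1) * wnorm2 n A x \<le> a2 + b2"
    by (simp add: field_simps add_pos_nonneg)
  with lo1 up show ?thesis unfolding Let_def S_def Psi_def phi by simp
qed


end

theorem theorem1:
  fixes t1 tJ :: nat
  assumes "0 < t1" and "t1 \<le> tJ"
  shows "\<exists>C>0. \<forall>(n::nat) (A::nat \<Rightarrow> nat \<Rightarrow> real) (J::nat) (t::nat \<Rightarrow> nat) (x::nat \<Rightarrow> real).
     is_graph n A \<and> 1 \<le> J \<and> t 1 = t1 \<and> t J = tJ \<and> (\<forall>j. 1 \<le> j \<and> j < J \<longrightarrow> t j < t (j + 1)) \<longrightarrow>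
     (let P = lazy_walk n A;
          Phi = mat_pow n P (t J);
          Psi = (\<lambda>j. if j = 0 then (\<lambda>a b. idm a b - mat_pow n P (t 1) a b)
                     else (\<lambda>a b. mat_pow n P (t j) a b - mat_pow n P (t (j + 1)) a b));
          S = wnorm2 n A (mat_vec n Phi x) + (\<Sum>j<J. wnorm2 n A (mat_vec n (Psi j) x))
      in C * wnorm2 n A x \<le> S \<and> S \<le> wnorm2 n A x)"
proof (intro exI[of _ "1 / (real tJ^2 + 1)"] conjI allI impI)
  show "0 < 1 / (real tJ^2 + 1)" by (simp add: add_nonneg_pos)
next
  fix n :: nat and A :: "nat \<Rightarrow> nat \<Rightarrow> real" and J :: nat and t :: "nat \<Rightarrow> nat" and x :: "nat \<Rightarrow> real"
  assume H: "is_graph n A \<and> 1 \<le> J \<and> t 1 = t1 \<and> t J = tJ \<and> (\<forall>j. 1 \<le> j \<and> j < J \<longrightarrow> t j < t (j + 1))"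
  then interpret gr n A by unfold_locales simp
  from H have tJ: "tJ = t J" by simp
  show "let P = lazy_walk n A;
          Phi = mat_pow n P (t J);
          Psi = (\<lambda>j. if j = 0 then (\<lambda>a b. idm a b - mat_pow n P (t 1) a b)
                     else (\<lambda>a b. mat_pow n P (t j) a b - mat_pow n P (t (j + 1)) a b));
          S = wnorm2 n A (mat_vec n Phi x) + (\<Sum>j<J. wnorm2 n A (mat_vec n (Psi j) x))
      in 1 / (real tJ^2 + 1) * wnorm2 n A x \<le> S \<and> S \<le> wnorm2 n A x"
    unfolding tJ by (rule main) (use H assms in auto)
qed

end
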